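(* Let $k\ge2$, $n,m\ge0$, and $M=k^m$. Let $F$ be a strategy for $k^n$ labeled chips at the root whose stable configuration is the permutation $\tau\in S_{k^n}$, and for each $i\in\{1,\dots,k^n\}$ let $F_i$ be a strategy for $k^m$ labeled chips at the root whose stable configuration is $\gamma_i\in S_{k^m}$. Start with $k^{n+m}$ chips labeled $1,\dots,k^{n+m}$ at the root. First perform the $F$-bundle with $M$ groups: for each $j\in\{1,\dots,M\}$, apply $F$ (via order-isomorphism) to the group of chips $\{j, M+j, 2M+j,\dots,(k^n-1)M+j\}$, using only vertices on layers $1,\dots,n$. Then, for each $i$, apply $F_i$ (via order-isomorphism, transported to the subtree) to the $k^m$ chips now on the $i$-th leftmost vertex of layer $n+1$, within the subtree rooted at that vertex. Then the resulting stable configuration is the inflation $\tau[\gamma_1,\dots,\gamma_{k^n}]$.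
   Context: Labeled chip-firing on the infinite rooted directed $k$-ary tree (each vertex has $k$ children ordered left to right, root on layer $1$, children of a layer-$t$ vertex on layer $t+1$): a vertex with at least $k$ chips may fire by choosing any $k$ of its chips and sending the $i$-th smallest label among them to its $i$-th leftmost child. A strategy is a sequence of legal firings continued until the configuration is stable (no vertex has $\ge k$ chips). Starting with $k^p$ chips at the root, every stable configuration has exactly one chip on each vertex of layer $p+1$ and none elsewhere, and is identified with the permutation (or, for arbitrary distinct labels, the sequence) of labels read from left to right on layer $p+1$. Since firing depends only on the relative order of labels, a strategy for chips $1,\dots,N$ can be applied to any set of $N$ distinct labels by letting the chip with the $r$-th smallest label play the role of chip $r$ (application via order-isomorphism); similarly a strategy at the root can be transported to the same firings in the subtree rooted at any vertex. Inflation: for $\tau\in S_n$ and permutations $\gamma_1,\dots,\gamma_n$, the inflation $\tau[\gamma_1,\dots,\gamma_n]$ is the permutation of length $|\gamma_1|+\cdots+|\gamma_n|$ consisting of $n$ consecutive blocks, where the $i$-th block is order-isomorphic to $\gamma_i$ and every choice of one entry from each block yields a sequence order-isomorphic to $\tau$. *)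

theory Defs
  imports Main
begin

text \<open>Vertices of the infinite rooted directed k-ary tree are paths from the root:
  lists of child indices (each < k).  The root is [] (layer 1); a vertex v lies on
  layer length v + 1; the i-th leftmost child (0-based i) of v is v @ [i].\<close>

type_synonym vertex = "nat list"
type_synonym config = "vertex \<Rightarrow> nat set"
type_synonym firing = "vertex \<times> nat set"   \<comment> \<open>vertex that fires, the k chips chosen\<close>

definition init_config :: "nat \<Rightarrow> config" where
  "init_config N = (\<lambda>u. if u = [] then {1..N} else {})"

text \<open>Firing v with the chosen k-set S: the i-th smallest label of S (0-based i)
  goes to the i-th leftmost child v @ [i].\<close>
definition fire :: "nat \<Rightarrow> config \<Rightarrow> vertex \<Rightarrow> nat set \<Rightarrow> config" where
  "fire k C v S = (\<lambda>u.
     if u = v then C v - S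
     else if length u = Suc (length v) \<and> take (length v) u = v \<and> last u < k
       then insert (sorted_list_of_set S ! last u) (C u)
     else C u)"

fun run :: "nat \<Rightarrow> config \<Rightarrow> firing list \<Rightarrow> config option" where
  "run k C [] = Some C"
| "run k C ((v, S) # fs) =
     (if S \<subseteq> C v \<and> card S = k then run k (fire k C v S) fs else None)"

definition stable :: "nat \<Rightarrow> config \<Rightarrow> bool" where
  "stable k C \<longleftrightarrow> (\<forall>v. finite (C v) \<and> card (C v) < k)"

text \<open>The i-th leftmost vertex (0-based i < k^p) of layer p+1: base-k digits of i.\<close>
fun vtx :: "nat \<Rightarrow> nat \<Rightarrow> nat \<Rightarrow> vertex" where
  "vtx k 0 i = []"
| "vtx k (Suc p) i = (i div k ^ p) # vtx k p (i mod k ^ p)"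

text \<open>The configuration with exactly one chip on each vertex of layer p+1, the labels
  read left to right being \<sigma> 1, ..., \<sigma> (k^p), and no chips elsewhere.\<close>
definition conf_of_seq :: "nat \<Rightarrow> nat \<Rightarrow> (nat \<Rightarrow> nat) \<Rightarrow> config" where
  "conf_of_seq k p \<sigma> = (\<lambda>u. {\<sigma> (i + 1) | i. i < k ^ p \<and> u = vtx k p i})"

definition strategy_result :: "nat \<Rightarrow> nat \<Rightarrow> firing list \<Rightarrow> (nat \<Rightarrow> nat) \<Rightarrow> bool" where
  "strategy_result k p F \<sigma> \<longleftrightarrow>
     (\<exists>C. run k (init_config (k ^ p)) F = Some C \<and> stable k C \<and> C = conf_of_seq k p \<sigma>)"

text \<open>Application via order-isomorphism to a label set L: the chip with the r-th
  smallest label of L plays the role of chip r.\<close>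
definition relabel :: "nat set \<Rightarrow> firing list \<Rightarrow> firing list" where
  "relabel L F = map (\<lambda>(v, S). (v, (\<lambda>r. sorted_list_of_set L ! (r - 1)) ` S)) F"

definition transport :: "vertex \<Rightarrow> firing list \<Rightarrow> firing list" where
  "transport w F = map (\<lambda>(v, S). (w @ v, S)) F"

text \<open>The F-bundle with M groups (N = number of chips F is designed for):
  F applied successively to the groups {j, M+j, ..., (N-1)M+j}, j = 1..M.\<close>
definition f_bundle :: "nat \<Rightarrow> nat \<Rightarrow> firing list \<Rightarrow> firing list" where
  "f_bundle N M F = concat (map (\<lambda>j. relabel {t * M + j | t. t < N} F) [1..<M + 1])"

text \<open>Inflation \<tau>[\<gamma>_1, ..., \<gamma>_n] when every \<gamma>_b has length L:
  position i lies in block b = (i-1) div L + 1 at offset r = (i-1) mod L + 1.\<close>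
definition inflation :: "nat \<Rightarrow> (nat \<Rightarrow> nat) \<Rightarrow> (nat \<Rightarrow> nat \<Rightarrow> nat) \<Rightarrow> nat \<Rightarrow> nat" where
  "inflation L \<tau> \<gamma> i =
     (\<tau> ((i - 1) div L + 1) - 1) * L + \<gamma> ((i - 1) div L + 1) ((i - 1) mod L + 1)"

end

theory Submission
  imports Defs
begin

lemma sorted_image_mono:
  assumes "strict_mono_on A f" "S \<subseteq> A" "finite S"
  shows "sorted_list_of_set (f ` S) = map f (sorted_list_of_set S)"
proof -
  let ?l = "sorted_list_of_set S"
  have inj: "inj_on f S" using assms(1,2) strict_mono_on_imp_inj_on inj_on_subset by blast
  have "sorted_wrt (<) ?l" using assms(3) by simp
  moreover have "set ?l \<subseteq> A" using assms by simp
  ultimately have "sorted_wrt (\<lambda>x y. f x < f y) ?l"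
    using sorted_wrt_mono_rel[of ?l "(<)" "\<lambda>x y. f x < f y"] assms(1)
    by (metis (no_types, lifting) strict_mono_onD subsetD)
  then have "sorted_wrt (<) (map f ?l)" by (simp add: sorted_wrt_map)
  moreover have "set (map f ?l) = f ` S" using assms(3) by simp
  moreover have "length (map f ?l) = card (f ` S)"
    using assms(3) inj by (simp add: card_image)
  ultimately show ?thesis
    using sorted_list_of_set_unique[of "f ` S"] assms(3) by blast
qed

lemma run_append: "run k C (xs @ ys) = (case run k C xs of None \<Rightarrow> None | Some C' \<Rightarrow> run k C' ys)"
proof (induction xs arbitrary: C)
  case Nil then show ?case by simp
next
  case (Cons a xs) then show ?case by (cases a) auto
qed

lemma run_blocks:
  assumes "\<And>j. a \<le> j \<Longrightarrow> j < b \<Longrightarrow> run k (D j) (G j) = Some (D (Suc j))" "a \<le> b"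
  shows "run k (D a) (concat (map G [a..<b])) = Some (D b)"
  using assms
proof (induction b)
  case 0 then show ?case by simp
next
  case (Suc b)
  show ?case
  proof (cases "a = Suc b")
    case True then show ?thesis by simp
  next
    case False
    then have "a \<le> b" using Suc by simp
    with Suc show ?thesis by (simp add: run_append)
  qed
qed

definition emb :: "(nat \<Rightarrow> nat) \<Rightarrow> vertex \<Rightarrow> config \<Rightarrow> config" where
  "emb f w C = (\<lambda>u. if take (length w) u = w then f ` C (drop (length w) u) else {})"

lemma run_inv:
  assumes "run k C F = Some C'" "\<forall>v. C v \<subseteq> A"
  shows "\<forall>v. C' v \<subseteq> A"
  using assms
proof (induction F arbitrary: C)
  case Nil then show ?case by simp
next
  case (Cons a F)
  obtain v S where a: "a = (v, S)" by force
  with Cons.prems have S: "S \<subseteq> C v" "card S = k" and r: "run k (fire k C v S) F = Some C'"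
    by (auto split: if_splits)
  have "\<forall>u. fire k C v S u \<subseteq> A"
  proof
    fix u
    have "sorted_list_of_set S ! last u \<in> A" if "last u < k"
    proof -
      have "finite S" using S that by (metis card.infinite not_less_zero)
      then have "sorted_list_of_set S ! last u \<in> S" using S that
        by (metis length_sorted_list_of_set nth_mem set_sorted_list_of_set)
      then show ?thesis using S Cons.prems(2) by blast
    qed
    then show "fire k C v S u \<subseteq> A" using Cons.prems(2) by (auto simp: fire_def)
  qed
  then show ?case using Cons.IH r by blast
qed

lemma fire_emb_out:
  assumes "take (length w) u \<noteq> w"
  shows "fire k D (w @ v) T u = D u"
proof -
  have "u \<noteq> w @ v" using assms by auto
  moreover have "take (length (w @ v)) u \<noteq> w @ v"
  proof
    assume h: "take (length (w @ v)) u = w @ v"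
    have "take (length w) u = take (length w) (take (length (w @ v)) u)" by (simp add: min_def)
    also have "\<dots> = w" using h by simp
    finally show False using assms by simp
  qed
  ultimately show ?thesis by (simp add: fire_def)
qed

lemma fire_emb_in:
  assumes S: "S \<subseteq> C v" "card S = k" and A: "\<forall>v. C v \<subseteq> A" and f: "strict_mono_on A f"
    and B: "\<forall>u. B u \<inter> f ` A = {}"
  shows "fire k (\<lambda>u. B u \<union> emb f w C u) (w @ v) (f ` S) (w @ u') = B (w @ u') \<union> emb f w (fire k C v S) (w @ u')"
proof -
  have SA: "S \<subseteq> A" using S A by blast
  have inj: "inj_on f A" using f strict_mono_on_imp_inj_on by blast
  show ?thesis
  proof (cases "u' = v")
    case True
    have "(B (w @ v) \<union> f ` C v) - f ` S = B (w @ v) \<union> f ` (C v - S)"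
      using B SA inj A S(1) inj_on_image_set_diff[of f A "C v" S] by blast
    then show ?thesis using True by (simp add: fire_def emb_def)
  next
    case False
    show ?thesis
    proof (cases "length u' = Suc (length v) \<and> take (length v) u' = v \<and> last u' < k")
      case True
      then have fin: "finite S" using S by (metis card.infinite not_less_zero)
      have "sorted_list_of_set (f ` S) ! last u' = f (sorted_list_of_set S ! last u')"
        using sorted_image_mono[OF f SA fin] True S fin by simp
      moreover have "last (w @ u') = last u'" using True by (metis last_appendR list.size(3) nat.distinct(1))
      ultimately show ?thesis using True False by (simp add: fire_def emb_def)
    next
      case c: False
      have "\<not> (length (w @ u') = Suc (length (w @ v)) \<and> take (length (w @ v)) (w @ u') = w @ v \<and> last (w @ u') < k)"
        using c by (cases "u' = []") auto
      then show ?thesis using False c by (auto simp: fire_def emb_def last_append)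
    qed
  qed
qed

lemma fire_emb:
  assumes S: "S \<subseteq> C v" "card S = k" and A: "\<forall>v. C v \<subseteq> A" and f: "strict_mono_on A f"
    and B: "\<forall>u. B u \<inter> f ` A = {}"
  shows "fire k (\<lambda>u. B u \<union> emb f w C u) (w @ v) (f ` S) = (\<lambda>u. B u \<union> emb f w (fire k C v S) u)"
proof
  fix u
  show "fire k (\<lambda>u. B u \<union> emb f w C u) (w @ v) (f ` S) u = B u \<union> emb f w (fire k C v S) u"
  proof (cases "take (length w) u = w")
    case True
    then have "u = w @ drop (length w) u" by (metis append_take_drop_id)
    then show ?thesis using fire_emb_in[OF S A f B, of w "drop (length w) u"] by metis
  next
    case False
    then show ?thesis using fire_emb_out[OF False] by (simp add: emb_def)
  qed
qed

lemma sim: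
  assumes "run k C0 F = Some C" "\<forall>v. C0 v \<subseteq> A" "strict_mono_on A f" "\<forall>x\<in>A. f' x = f x"
    "\<forall>u. B u \<inter> f ` A = {}"
  shows "run k (\<lambda>u. B u \<union> emb f w C0 u) (map (\<lambda>(v,S). (w @ v, f' ` S)) F) = Some (\<lambda>u. B u \<union> emb f w C u)"
  using assms(1,2)
proof (induction F arbitrary: C0)
  case Nil then show ?case by simp
next
  case (Cons a F)
  obtain v S where a: "a = (v, S)" by force
  with Cons.prems have S: "S \<subseteq> C0 v" "card S = k" and r: "run k (fire k C0 v S) F = Some C"
    by (auto split: if_splits)
  have SA: "S \<subseteq> A" using S Cons.prems(2) by blast
  have inj: "inj_on f A" using assms(3) strict_mono_on_imp_inj_on by blast
  have img: "f' ` S = f ` S" using SA assms(4) by (auto intro!: image_cong)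
  have sub: "f ` S \<subseteq> B (w @ v) \<union> emb f w C0 (w @ v)" using S by (auto simp: emb_def)
  have card: "card (f ` S) = k" using S inj SA by (metis card_image inj_on_subset)
  have inv: "\<forall>u. fire k C0 v S u \<subseteq> A"
    using run_inv[of k C0 "[(v,S)]" "fire k C0 v S" A] S Cons.prems(2) by simp
  show ?case
    using a img sub card fire_emb[OF S Cons.prems(2) assms(3) assms(5), of w] Cons.IH[OF r inv]
    by simp
qed

lemma length_vtx[simp]: "length (vtx k n i) = n"
  by (induction n arbitrary: i) auto

lemma vtx_append:
  assumes "k > 0" "p < k ^ (n + m)"
  shows "vtx k (n + m) p = vtx k n (p div k ^ m) @ vtx k m (p mod k ^ m)"
  using assms(2)
proof (induction n arbitrary: p)
  case 0
  then show ?case using assms by simp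
next
  case (Suc n)
  have "vtx k (Suc n + m) p = (p div k ^ (n + m)) # vtx k (n + m) (p mod k ^ (n + m))" by simp
  also have "\<dots> = (p div k ^ (n + m)) # vtx k n (p mod k ^ (n + m) div k ^ m) @ vtx k m (p mod k ^ (n + m) mod k ^ m)"
    using Suc.IH[of "p mod k ^ (n + m)"] assms(1) by simp
  also have "p mod k ^ (n + m) div k ^ m = p div k ^ m mod k ^ n"
  proof -
    have "p mod k ^ (n + m) = k ^ m * (p div k ^ m mod k ^ n) + p mod k ^ m"
      using mod_mult2_eq[of p "k ^ m" "k ^ n"] by (simp add: power_add mult.commute)
    then show ?thesis using assms(1) by simp
  qed
  also have "p mod k ^ (n + m) mod k ^ m = p mod k ^ m"
    by (simp add: power_add mod_mod_cancel)
  also have "p div k ^ (n + m) = p div k ^ m div k ^ n"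
    by (simp add: power_add div_mult2_eq mult.commute)
  finally show ?case by simp
qed

lemma vtx_inj:
  assumes "k > 0" "i < k ^ n" "j < k ^ n" "vtx k n i = vtx k n j"
  shows "i = j"
  using assms(2-4)
proof (induction n arbitrary: i j)
  case 0 then show ?case by simp
next
  case (Suc n)
  have h: "i div k ^ n = j div k ^ n" and t: "vtx k n (i mod k ^ n) = vtx k n (j mod k ^ n)"
    using Suc.prems(3) by auto
  have "i mod k ^ n = j mod k ^ n"
    using Suc.IH[OF _ _ t] assms(1) by simp
  then show ?case using h by (metis div_mult_mod_eq)
qed

lemma divmod_uniq:
  fixes a b x y M :: nat
  assumes "a * M + x = b * M + y" "x < M" "y < M"
  shows "a = b \<and> x = y"
proof -
  have "(a * M + x) mod M = x" "(b * M + y) mod M = y" using assms(2,3) by simp_all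
  then have xy: "x = y" using assms(1) by metis
  then have "a * M = b * M" using assms(1) by simp
  then show ?thesis using xy assms(2) by simp
qed

lemma stable_conf:
  assumes "k \<ge> 2"
  shows "stable k (conf_of_seq k p \<sigma>)"
  unfolding stable_def
proof
  fix u
  let ?X = "conf_of_seq k p \<sigma> u"
  have fin: "finite ?X"
    by (rule finite_subset[of _ "(\<lambda>i. \<sigma> (i + 1)) ` {..<k ^ p}"]) (auto simp: conf_of_seq_def)
  have "\<forall>a\<in>?X. \<forall>b\<in>?X. a = b"
    using vtx_inj[of k] assms by (auto simp: conf_of_seq_def)
  then have "card ?X \<le> Suc 0" using card_le_Suc0_iff_eq[OF fin] by blast
  then show "finite ?X \<and> card ?X < k" using fin assms by simp
qed

lemma emb_init:
  "emb f w (init_config N) u = (if u = w then f ` {1..N} else {})"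
proof -
  have "(take (length w) u = w \<and> drop (length w) u = []) \<longleftrightarrow> u = w"
    by (metis append_Nil2 append_take_drop_id length_drop diff_self_eq_0 length_0_conv)
  then show ?thesis by (auto simp: emb_def init_config_def)
qed

lemma final_eq:
  assumes "k > 0"
  shows "(\<Union>i\<in>{1..k^n}. emb (\<lambda>r. (\<tau> i - 1) * k^m + r) (vtx k n (i - 1)) (conf_of_seq k m (\<gamma> i)) u)
       = conf_of_seq k (n + m) (inflation (k ^ m) \<tau> \<gamma>) u"
proof (intro equalityI subsetI)
  have M: "k ^ m > 0" using assms by simp
  fix x
  {
    assume "x \<in> (\<Union>i\<in>{1..k^n}. emb (\<lambda>r. (\<tau> i - 1) * k^m + r) (vtx k n (i - 1)) (conf_of_seq k m (\<gamma> i)) u)"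
    then obtain i where i: "i \<in> {1..k^n}"
      and xx: "x \<in> emb (\<lambda>r. (\<tau> i - 1) * k^m + r) (vtx k n (i - 1)) (conf_of_seq k m (\<gamma> i)) u" by blast
    then have tk: "take n u = vtx k n (i - 1)"
      and "x \<in> (\<lambda>r. (\<tau> i - 1) * k^m + r) ` conf_of_seq k m (\<gamma> i) (drop n u)"
      by (auto simp: emb_def split: if_splits)
    then obtain l where l: "l < k^m" "drop n u = vtx k m l" and xe: "x = (\<tau> i - 1) * k^m + \<gamma> i (l + 1)"
      by (auto simp: conf_of_seq_def)
    define p where "p = (i - 1) * k^m + l"
    have pd: "p div k^m = i - 1" "p mod k^m = l" using l M by (simp_all add: p_def)
    have "p < (i - 1) * k^m + k^m" using l by (simp add: p_def)
    also have "\<dots> = i * k^m" using i by (cases i) auto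
    also have "\<dots> \<le> k^n * k^m" using i by simp
    finally have pl: "p < k^(n+m)" by (simp add: power_add)
    have "u = take n u @ drop n u" by simp
    also have "\<dots> = vtx k (n + m) p" using vtx_append[OF assms pl] pd tk l by simp
    finally have uu: "u = vtx k (n + m) p" .
    have "x = inflation (k^m) \<tau> \<gamma> (p + 1)"
      using xe pd i by (simp add: inflation_def)
    then show "x \<in> conf_of_seq k (n + m) (inflation (k ^ m) \<tau> \<gamma>) u"
      unfolding conf_of_seq_def using pl uu by blast
  }
  {
    assume "x \<in> conf_of_seq k (n + m) (inflation (k ^ m) \<tau> \<gamma>) u"
    then obtain p where pl: "p < k^(n+m)" and uu: "u = vtx k (n + m) p" and xe: "x = inflation (k^m) \<tau> \<gamma> (p + 1)"
      by (auto simp: conf_of_seq_def)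
    define i where "i = p div k^m + 1"
    define l where "l = p mod k^m"
    have "p div k^m < k^n" using pl by (simp add: power_add less_mult_imp_div_less)
    then have i: "i \<in> {1..k^n}" by (simp add: i_def)
    have u2: "u = vtx k n (i - 1) @ vtx k m l" using vtx_append[OF assms pl] uu by (simp add: i_def l_def)
    have l: "l < k^m" using M by (simp add: l_def)
    have xe2: "x = (\<tau> i - 1) * k^m + \<gamma> i (l + 1)" using xe by (simp add: inflation_def i_def l_def)
    have "x \<in> emb (\<lambda>r. (\<tau> i - 1) * k^m + r) (vtx k n (i - 1)) (conf_of_seq k m (\<gamma> i)) u"
      using u2 l xe2 by (auto simp: emb_def conf_of_seq_def)
    then show "x \<in> (\<Union>i\<in>{1..k^n}. emb (\<lambda>r. (\<tau> i - 1) * k^m + r) (vtx k n (i - 1)) (conf_of_seq k m (\<gamma> i)) u)"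
      using i by blast
  }
qed

lemma hdisj:
  fixes M a b r s :: nat
  assumes "(a - 1) * M + r = (b - 1) * M + s" "r \<in> {1..M}" "s \<in> {1..M}"
  shows "a - 1 = b - 1 \<and> r = s"
proof -
  have "(a - 1) * M + (r - 1) = (b - 1) * M + (s - 1)" using assms by auto
  moreover have "r - 1 < M" "s - 1 < M" using assms(2,3) by auto
  ultimately have "a - 1 = b - 1 \<and> r - 1 = s - 1" using divmod_uniq by blast
  then show ?thesis using assms(2,3) by auto
qed

lemma sorted_interval_map:
  assumes "strict_mono_on {1..M} f" "r \<in> {1..M}"
  shows "sorted_list_of_set (f ` {1..M}) ! (r - 1) = f r"
proof -
  have "sorted_list_of_set (f ` {1..M}) = map f (sorted_list_of_set {1..M})"
    using sorted_image_mono[OF assms(1)] by simp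
  also have "sorted_list_of_set {1..M} = [1..<Suc M]"
    by (metis atLeastLessThanSuc_atLeastAtMost sorted_list_of_set_range)
  moreover have "map f [1..<Suc M] ! (r - 1) = f r" using assms(2) by (cases r) (auto simp del: upt_Suc)
  ultimately show ?thesis by simp
qed

lemma emb_sub: "\<forall>v. C v \<subseteq> A \<Longrightarrow> emb f w C u \<subseteq> f ` A"
  by (auto simp: emb_def)

theorem proposition4p1:
  fixes k n m :: nat and F :: "firing list" and Fs :: "nat \<Rightarrow> firing list"
    and \<tau> :: "nat \<Rightarrow> nat" and \<gamma> :: "nat \<Rightarrow> nat \<Rightarrow> nat"
  assumes "k \<ge> 2"
    and "bij_betw \<tau> {1..k ^ n} {1..k ^ n}"
    and "strategy_result k n F \<tau>"
    and "\<And>i. i \<in> {1..k ^ n} \<Longrightarrow> bij_betw (\<gamma> i) {1..k ^ m} {1..k ^ m}"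
    and "\<And>i. i \<in> {1..k ^ n} \<Longrightarrow> strategy_result k m (Fs i) (\<gamma> i)"
  shows "\<exists>C1 C2.
           run k (init_config (k ^ (n + m))) (f_bundle (k ^ n) (k ^ m) F) = Some C1 \<and>
           run k C1 (concat (map (\<lambda>i. transport (vtx k n (i - 1))
                                         (relabel (C1 (vtx k n (i - 1))) (Fs i)))
                               [1..<k ^ n + 1])) = Some C2 \<and>
           stable k C2 \<and>
           C2 = conf_of_seq k (n + m) (inflation (k ^ m) \<tau> \<gamma>)"
proof -
  have k0: "k > 0" using assms(1) by simp
  define N where "N = k ^ n"
  define M where "M = k ^ m"
  have N0: "N > 0" "M > 0" using k0 by (simp_all add: N_def M_def)
  obtain C\<tau> where runF: "run k (init_config N) F = Some C\<tau>" and C\<tau>: "C\<tau> = conf_of_seq k n \<tau>"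
    using assms(3) by (auto simp: strategy_result_def N_def)
  have initA: "\<forall>v. init_config N v \<subseteq> {1..N}" by (simp add: init_config_def)
  have C\<tau>A: "\<forall>v. C\<tau> v \<subseteq> {1..N}" using run_inv[OF runF initA] .
  define h :: "nat \<Rightarrow> nat \<Rightarrow> nat" where "h j r = (r - 1) * M + j" for j r
  define Grp where "Grp j = {t * M + j | t. t < N}" for j
  define g where "g j r = sorted_list_of_set (Grp j) ! (r - 1)" for j r
  have hmono: "strict_mono_on {1..N} (h j)" for j
    unfolding strict_mono_on_def h_def using N0 by auto
  have geq: "\<forall>r\<in>{1..N}. g j r = h j r" for j
  proof
    fix r assume r: "r \<in> {1..N}"
    have G: "Grp j = (\<lambda>t. t * M + j) ` {0..<N}" by (auto simp: Grp_def)
    have sm: "strict_mono_on UNIV (\<lambda>t. t * M + j)"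
      unfolding strict_mono_on_def using N0 by auto
    have "sorted_list_of_set (Grp j) = map (\<lambda>t. t * M + j) [0..<N]"
      unfolding G using sorted_image_mono[OF sm, of "{0..<N}"] by simp
    moreover have "r - 1 < N" using r by auto
    ultimately show "g j r = h j r" by (simp add: g_def h_def)
  qed
  have hdis: "j = j'" if "j \<in> {1..M}" "j' \<in> {1..M}" "h j r = h j' s" for j j' r s
    using hdisj[of r M j s j'] that by (simp add: h_def)
  define D where "D j u = (\<Union>j'\<in>{j..M}. h j' ` init_config N u) \<union> (\<Union>j'\<in>{1..<j}. h j' ` C\<tau> u)" for j u
  have step1: "run k (D j) (relabel (Grp j) F) = Some (D (Suc j))" if j: "1 \<le> j" "j < M + 1" for j
  proof -
    define B where "B u = (\<Union>j'\<in>{Suc j..M}. h j' ` init_config N u) \<union> (\<Union>j'\<in>{1..<j}. h j' ` C\<tau> u)" for u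
    have s1: "{j..M} = insert j {Suc j..M}" "{1..<Suc j} = insert j {1..<j}" using j by auto
    have e1: "D j = (\<lambda>u. B u \<union> emb (h j) [] (init_config N) u)"
      unfolding D_def B_def emb_def s1 by auto
    have e2: "D (Suc j) = (\<lambda>u. B u \<union> emb (h j) [] C\<tau> u)"
      unfolding D_def B_def emb_def s1 by auto
    have rl: "relabel (Grp j) F = map (\<lambda>(v,S). ([] @ v, g j ` S)) F"
      by (simp add: relabel_def g_def)
    have dis: "\<forall>u. B u \<inter> h j ` {1..N} = {}"
    proof (intro allI equalityI subsetI)
      fix u x assume x: "x \<in> B u \<inter> h j ` {1..N}"
      have "B u \<subseteq> (\<Union>j'\<in>{1..M}-{j}. range (h j'))" unfolding B_def using j by (intro Un_least UN_least) fastforce+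
      then have "x \<in> (\<Union>j'\<in>{1..M}-{j}. range (h j'))" using x by blast
      then obtain j' r where j': "j' \<in> {1..M}" "j' \<noteq> j" "x = h j' r" by blast
      obtain s where "x = h j s" using x by blast
      then have "h j' r = h j s" using j' by simp
      with j' have "j' \<in> {1..M}" "j' \<noteq> j" "h j' r = h j s" by auto
      then show "x \<in> {}" using hdis[of j' j r s] j by auto
    qed auto
    show ?thesis using sim[OF runF initA hmono _ dis, of "g j" "[]"] geq e1 e2 rl by simp
  qed
  have run1: "run k (D 1) (concat (map (\<lambda>j. relabel (Grp j) F) [1..<M + 1])) = Some (D (M + 1))"
    using run_blocks[of 1 "M + 1" k D "\<lambda>j. relabel (Grp j) F"] step1 by simp
  have cover: "(\<Union>j\<in>{1..M}. h j ` {1..N}) = {1..N * M}"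
  proof (intro equalityI subsetI)
    fix x assume "x \<in> (\<Union>j\<in>{1..M}. h j ` {1..N})"
    then obtain j r where jr: "j \<in> {1..M}" "r \<in> {1..N}" "x = (r - 1) * M + j" by (auto simp: h_def)
    have "(r - 1) * M + j \<le> (r - 1) * M + M" using jr by simp
    also have "\<dots> = r * M" using jr by (cases r) auto
    also have "\<dots> \<le> N * M" using jr by simp
    finally show "x \<in> {1..N * M}" using jr by simp
  next
    fix x assume x: "x \<in> {1..N * M}"
    define r where "r = (x - 1) div M + 1"
    define j where "j = (x - 1) mod M + 1"
    have "x - 1 < N * M" using x by auto
    then have "(x - 1) div M < N" using less_mult_imp_div_less by blast
    then have r: "r \<in> {1..N}" by (simp add: r_def)
    have "(x - 1) mod M < M" using N0 by simp
    then have j: "j \<in> {1..M}" by (simp add: j_def)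
    have "h j r = (x - 1) div M * M + (x - 1) mod M + 1" by (simp add: h_def r_def j_def)
    also have "\<dots> = x" using x by simp
    finally show "x \<in> (\<Union>j\<in>{1..M}. h j ` {1..N})" using r j by force
  qed
  have D1: "D 1 = init_config (k ^ (n + m))"
  proof
    fix u
    have "{1..<1::nat} = {}" by simp
    then show "D 1 u = init_config (k ^ (n + m)) u"
      using cover by (simp add: D_def init_config_def N_def M_def power_add)
  qed
  define C1 where "C1 = D (M + 1)"
  have C1e: "C1 u = (\<Union>j\<in>{1..M}. h j ` C\<tau> u)" for u
  proof -
    have "{1..<M + 1} = {1..M}" "{M + 1..M} = {}" by auto
    then show ?thesis unfolding C1_def D_def by simp
  qed
  have fb: "f_bundle (k ^ n) (k ^ m) F = concat (map (\<lambda>j. relabel (Grp j) F) [1..<M + 1])"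
    by (simp add: f_bundle_def Grp_def N_def M_def)
  have ph1: "run k (init_config (k ^ (n + m))) (f_bundle (k ^ n) (k ^ m) F) = Some C1"
    using run1 D1 fb C1_def by simp
  define f where "f i r = (\<tau> i - 1) * M + r" for i r
  define C\<gamma> where "C\<gamma> i = conf_of_seq k m (\<gamma> i)" for i
  have runFs: "run k (init_config M) (Fs i) = Some (C\<gamma> i)" if "i \<in> {1..N}" for i
    using assms(5)[of i] that by (auto simp: strategy_result_def N_def M_def C\<gamma>_def)
  have initM: "\<forall>v. init_config M v \<subseteq> {1..M}" by (simp add: init_config_def)
  have C\<gamma>A: "\<forall>v. C\<gamma> i v \<subseteq> {1..M}" if "i \<in> {1..N}" for i
    using run_inv[OF runFs[OF that] initM] .
  have \<tau>r: "\<tau> i \<in> {1..N}" if "i \<in> {1..N}" for i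
    using assms(2) that unfolding N_def bij_betw_def by blast
  have \<tau>inj: "inj_on \<tau> {1..N}" using assms(2) unfolding N_def bij_betw_def by blast
  have C\<tau>v: "C\<tau> (vtx k n (i - 1)) = {\<tau> i}" if i: "i \<in> {1..N}" for i
  proof -
    have "vtx k n (i - 1) = vtx k n i' \<Longrightarrow> i' < N \<Longrightarrow> i' = i - 1" for i'
      using vtx_inj[OF k0, of "i - 1" n i'] i by (auto simp: N_def)
    moreover have "i - 1 < N" "i - 1 + 1 = i" using i by auto
    ultimately show ?thesis unfolding C\<tau> conf_of_seq_def N_def[symmetric]
      by (intro equalityI subsetI) (force, force)
  qed
  have C1v: "C1 (vtx k n (i - 1)) = f i ` {1..M}" if i: "i \<in> {1..N}" for i
  proof -
    have "C1 (vtx k n (i - 1)) = (\<Union>j\<in>{1..M}. {h j (\<tau> i)})" using C1e C\<tau>v[OF i] by simp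
    also have "\<dots> = f i ` {1..M}" unfolding f_def h_def by blast
    finally show ?thesis .
  qed
  have fmono: "strict_mono_on A (f i)" for i A
    unfolding strict_mono_on_def f_def by auto
  define g' where "g' i r = sorted_list_of_set (C1 (vtx k n (i - 1))) ! (r - 1)" for i r
  have g'eq: "\<forall>r\<in>{1..M}. g' i r = f i r" if i: "i \<in> {1..N}" for i
    using sorted_interval_map[OF fmono] C1v[OF i] by (simp add: g'_def)
  have tr: "transport (vtx k n (i - 1)) (relabel (C1 (vtx k n (i - 1))) (Fs i))
      = map (\<lambda>(v, S). (vtx k n (i - 1) @ v, g' i ` S)) (Fs i)" for i
    by (simp add: transport_def relabel_def g'_def case_prod_beta comp_def)
  have fdis: "i = i'" if "i \<in> {1..N}" "i' \<in> {1..N}" "r \<in> {1..M}" "s \<in> {1..M}" "f i r = f i' s" for i i' r s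
  proof -
    have "\<tau> i - 1 = \<tau> i' - 1" using hdisj[of "\<tau> i" M r "\<tau> i'" s] that by (simp add: f_def)
    moreover have "\<tau> i \<ge> 1" "\<tau> i' \<ge> 1" using \<tau>r[of i] \<tau>r[of i'] that by auto
    ultimately have "\<tau> i = \<tau> i'" by linarith
    then show ?thesis using \<tau>inj that unfolding inj_on_def by blast
  qed
  define E where "E i u = (\<Union>i'\<in>{i..N}. emb (f i') (vtx k n (i' - 1)) (init_config M) u)
      \<union> (\<Union>i'\<in>{1..<i}. emb (f i') (vtx k n (i' - 1)) (C\<gamma> i') u)" for i u
  have step2: "run k (E i) (transport (vtx k n (i - 1)) (relabel (C1 (vtx k n (i - 1))) (Fs i))) = Some (E (Suc i))"
    if i: "1 \<le> i" "i < N + 1" for i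
  proof -
    have iN: "i \<in> {1..N}" using i by simp
    define B where "B u = (\<Union>i'\<in>{Suc i..N}. emb (f i') (vtx k n (i' - 1)) (init_config M) u)
      \<union> (\<Union>i'\<in>{1..<i}. emb (f i') (vtx k n (i' - 1)) (C\<gamma> i') u)" for u
    have s1: "{i..N} = insert i {Suc i..N}" "{1..<Suc i} = insert i {1..<i}" using i by auto
    have e1: "E i = (\<lambda>u. B u \<union> emb (f i) (vtx k n (i - 1)) (init_config M) u)"
      unfolding E_def B_def s1 by auto
    have e2: "E (Suc i) = (\<lambda>u. B u \<union> emb (f i) (vtx k n (i - 1)) (C\<gamma> i) u)"
      unfolding E_def B_def s1 by auto
    have dis: "\<forall>u. B u \<inter> f i ` {1..M} = {}"
    proof (intro allI equalityI subsetI)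
      fix u x assume x: "x \<in> B u \<inter> f i ` {1..M}"
      have "B u \<subseteq> (\<Union>i'\<in>{1..N}-{i}. f i' ` {1..M})"
        unfolding B_def
      proof (intro Un_least UN_least)
        fix i' assume "i' \<in> {Suc i..N}"
        then show "emb (f i') (vtx k n (i' - 1)) (init_config M) u \<subseteq> (\<Union>i'\<in>{1..N}-{i}. f i' ` {1..M})"
          using emb_sub[OF initM] by (intro subset_trans[OF _ UN_upper[of i']]) auto
      next
        fix i' assume "i' \<in> {1..<i}"
        then show "emb (f i') (vtx k n (i' - 1)) (C\<gamma> i') u \<subseteq> (\<Union>i'\<in>{1..N}-{i}. f i' ` {1..M})"
          using emb_sub[OF C\<gamma>A] i by (intro subset_trans[OF _ UN_upper[of i']]) auto
      qed
      then have "x \<in> (\<Union>i'\<in>{1..N}-{i}. f i' ` {1..M})" using x by blast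
      then obtain i' r where i': "i' \<in> {1..N}" "i' \<noteq> i" "r \<in> {1..M}" "x = f i' r" by blast
      obtain s where s: "s \<in> {1..M}" "x = f i s" using x by blast
      show "x \<in> {}" using fdis[of i' i r s] i' s iN by auto
    qed auto
    show ?thesis
      using sim[OF runFs[OF iN] initM fmono g'eq[OF iN] dis, of "vtx k n (i - 1)"] e1 e2 tr[of i] by simp
  qed
  have E1: "E 1 = C1"
  proof
    fix u
    have "E 1 u = (\<Union>i\<in>{1..N}. if u = vtx k n (i - 1) then f i ` {1..M} else {})"
      by (simp add: E_def emb_init)
    also have "\<dots> = C1 u"
    proof (intro equalityI subsetI)
      fix x assume "x \<in> (\<Union>i\<in>{1..N}. if u = vtx k n (i - 1) then f i ` {1..M} else {})"
      then obtain i where "i \<in> {1..N}" "u = vtx k n (i - 1)" "x \<in> f i ` {1..M}"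
        by (auto split: if_splits)
      then show "x \<in> C1 u" using C1v by auto
    next
      fix x assume "x \<in> C1 u"
      then obtain j where j: "j \<in> {1..M}" "x \<in> h j ` C\<tau> u" using C1e by auto
      then obtain i' where i': "i' < N" "u = vtx k n i'" "x = h j (\<tau> (i' + 1))"
        by (auto simp: C\<tau> conf_of_seq_def N_def)
      then have "x \<in> f (i' + 1) ` {1..M}" using j by (auto simp: h_def f_def)
      then show "x \<in> (\<Union>i\<in>{1..N}. if u = vtx k n (i - 1) then f i ` {1..M} else {})"
        using i' by (intro UN_I[of "i' + 1"]) auto
    qed
    finally show "E 1 u = C1 u" .
  qed
  have run2: "run k C1 (concat (map (\<lambda>i. transport (vtx k n (i - 1)) (relabel (C1 (vtx k n (i - 1))) (Fs i))) [1..<N + 1]))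
      = Some (E (N + 1))"
    using run_blocks[of 1 "N + 1" k E] step2 E1 by simp
  have EN: "E (N + 1) = conf_of_seq k (n + m) (inflation (k ^ m) \<tau> \<gamma>)"
  proof
    fix u
    have "{1..<N + 1} = {1..N}" "{N + 1..N} = {}" by auto
    then have "E (N + 1) u = (\<Union>i\<in>{1..N}. emb (f i) (vtx k n (i - 1)) (C\<gamma> i) u)"
      by (simp add: E_def)
    also have fl: "f = (\<lambda>i r. (\<tau> i - 1) * k ^ m + r)" by (simp add: fun_eq_iff f_def M_def)
    also have "(\<Union>i\<in>{1..N}. emb ((\<lambda>i r. (\<tau> i - 1) * k ^ m + r) i) (vtx k n (i - 1)) (C\<gamma> i) u) = conf_of_seq k (n + m) (inflation (k ^ m) \<tau> \<gamma>) u"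
      using final_eq[OF k0, where n=n and m=m and \<tau>=\<tau> and \<gamma>=\<gamma> and u=u] by (simp add: N_def C\<gamma>_def)
    finally show "E (N + 1) u = conf_of_seq k (n + m) (inflation (k ^ m) \<tau> \<gamma>) u" .
  qed
  show ?thesis
    using ph1 run2 EN stable_conf[OF assms(1)] by (auto simp: N_def)
qed

end
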